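(* Suppose we have $2$ agents with additive, normalized valuations, provided with predictions of accuracy $\eta<1-\frac{1-a}{\min\{6a,4\}}$ for some given $a\in(\frac12,1]$, that is, the allowed error between the predictions and the true valuations is $1-\eta>\frac{1-a}{\min\{6a,4\}}$. Then there is no online algorithm that guarantees an $a$-EFX allocation for all instances whose errors are at most $1-\eta$, even when $T'=T=4$ and the predictions and the true valuations are $4$-value functions.
   Context: Online fair division with predictions: agents $N=[n]$; goods $g_1,\dots,g_T$ arrive one per time step. Each agent $i$ has a true additive normalized valuation $v_i$ ($v_i(g_t)\ge0$, $\sum_{t\in[T]}v_i(g_t)=1$, $v_i(S)=\sum_{g\in S}v_i(g)$) and, before any arrival, the algorithm receives a prediction $p_i=(p_i(g_1),\dots,p_i(g_{T'}))$ for each agent (an additive normalized valuation over $T'$ predicted goods) together with the accuracy level. Error $d_i=\frac12\sum_{t=1}^{\max\{T,T'\}}|p_i(g_t)-v_i(g_t)|$ (missing entries set to $0$), accuracy $\eta_i=1-d_i$; accuracy $\eta$ means $d_i\le 1-\eta$ for all $i$. At time $t$ the true values $v_i(g_t)$ are revealed and $g_t$ must be irrevocably allocated. For $S\ne\emptyset$ and valuation $f$, $\bar S^f=S\setminus\{g\}$ with $g\in\arg\max_{g'\in S}f(S\setminus\{g'\})$, $\bar\emptyset^f=\emptyset$. An allocation is $a$-EFX if $v_i(A_i)\ge a\cdot v_i(\bar{A_j}^{v_i})$ for all $i,j$. A function is $k$-value if it takes at most $k$ distinct values. *)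

theory Defs
  imports Complex_Main
begin

(* Agents are 0 ..< n, goods g_1..g_T are indexed 0 ..< T.
   A valuation profile is  v :: nat \<Rightarrow> nat \<Rightarrow> real,  v i t = value of agent i for good t. *)

definition val :: "(nat \<Rightarrow> real) \<Rightarrow> nat set \<Rightarrow> real" where
  "val f S = (\<Sum>g\<in>S. f g)"

definition bar :: "(nat \<Rightarrow> real) \<Rightarrow> nat set \<Rightarrow> nat set" where
  "bar f S = (if S = {} then {}
      else S - {SOME g. g \<in> S \<and> (\<forall>g'\<in>S. val f (S - {g'}) \<le> val f (S - {g}))})"

definition normalized_val :: "nat \<Rightarrow> (nat \<Rightarrow> real) \<Rightarrow> bool" where
  "normalized_val T f \<longleftrightarrow> (\<forall>t<T. 0 \<le> f t) \<and> (\<Sum>t<T. f t) = 1"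

definition k_value :: "nat \<Rightarrow> nat \<Rightarrow> (nat \<Rightarrow> real) \<Rightarrow> bool" where
  "k_value k T f \<longleftrightarrow> card (f ` {..<T}) \<le> k"

definition pred_error :: "nat \<Rightarrow> (nat \<Rightarrow> real) \<Rightarrow> (nat \<Rightarrow> real) \<Rightarrow> real" where
  "pred_error T p v = (1/2) * (\<Sum>t<T. \<bar>p t - v t\<bar>)"

(* agent_bundle of agent i under allocation alloc (good \<Rightarrow> agent) *)
definition agent_bundle :: "nat \<Rightarrow> (nat \<Rightarrow> nat) \<Rightarrow> nat \<Rightarrow> nat set" where
  "agent_bundle T alloc i = {t. t < T \<and> alloc t = i}"

definition a_EFX :: "real \<Rightarrow> nat \<Rightarrow> nat \<Rightarrow> (nat \<Rightarrow> nat \<Rightarrow> real) \<Rightarrow> (nat \<Rightarrow> nat) \<Rightarrow> bool" where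
  "a_EFX a n T v alloc \<longleftrightarrow>
     (\<forall>i<n. \<forall>j<n. val (v i) (agent_bundle T alloc i) \<ge> a * val (v i) (bar (v i) (agent_bundle T alloc j)))"

(* A deterministic online algorithm with predictions for n agents:
   alg p v t is the agent receiving good t; it may depend on the predictions p (all given
   upfront) but only on the true values v i s of goods s \<le> t revealed so far. *)
definition online_alg :: "nat \<Rightarrow> nat \<Rightarrow> ((nat \<Rightarrow> nat \<Rightarrow> real) \<Rightarrow> (nat \<Rightarrow> nat \<Rightarrow> real) \<Rightarrow> nat \<Rightarrow> nat) \<Rightarrow> bool" where
  "online_alg n T alg \<longleftrightarrow>
     (\<forall>p v t. t < T \<longrightarrow> alg p v t < n) \<and>
     (\<forall>p v v' t. (\<forall>i<n. \<forall>s\<le>t. v i s = v' i s) \<longrightarrow> alg p v t = alg p v' t)"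

end

theory Submission
  imports Defs
begin

lemma core:
  fixes a d :: real
  assumes a1: "1/2 < a" and a2: "a \<le> 1" and dd: "(1 - a) / min (6 * a) 4 < d"
  shows "\<exists>t e. 0 < e \<and> e \<le> d \<and> e \<le> t \<and> 3*t+2*e \<le> 1 \<and> 2*t < a*(1-3*t)
     \<and> 1-3*t-2*e < 2*a*(t+e) \<and> t+e < a*(1-2*t-e)"
proof -
  have p1: "0 < 2+3*a" "0 < 3+2*a" "0 < 1+2*a" using a1 by auto
  have th: "(1-a)/(2+3*a) \<le> (1 - a) / min (6 * a) 4"
    apply (rule divide_left_mono) using a1 a2 by (auto simp: min_def)
  define e where "e = min d ((3-2*a)/(4*(2+3*a)))"
  have ea: "(1-a)/(2+3*a) < d" using th dd by linarith
  have eb: "(1-a)/(2+3*a) < (3-2*a)/(4*(2+3*a))"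
  proof -
    have "0 < (2+3*a)*(2*a-1)" using p1 a1 by simp
    then show ?thesis using p1 by (simp add: divide_simps algebra_simps)
  qed
  have e0: "(1-a)/(2+3*a) < e" unfolding e_def using ea eb by simp
  have e0': "1-a < e*(2+3*a)" using e0 p1 by (simp add: divide_simps)
  have "e \<le> (3-2*a)/(4*(2+3*a))" unfolding e_def by simp
  then have "e*(4*(2+3*a)) \<le> 3-2*a" using p1 by (simp add: pos_le_divide_eq)
  moreover have "4*e*(2+3*a) = e*(4*(2+3*a))" by simp
  ultimately have e1: "4*e*(2+3*a) \<le> 3-2*a" by linarith
  have "0 \<le> (1-a)/(2+3*a)" using a2 p1 by simp
  then have epos: "0 < e" using e0 by linarith
  have ed: "e \<le> d" unfolding e_def by simp
  define lo where "lo = max ((1-2*e*(1+a))/(3+2*a)) e"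
  define hi where "hi = min (a/(2+3*a)) (min ((a - e*(1+a))/(1+2*a)) ((1-2*e)/3))"
  have c1: "(1-2*e*(1+a))*(2+3*a) < a*(3+2*a)"
  proof -
    have "2*(1+a)*(1-a) < 2*(1+a)*(e*(2+3*a))" using e0' a1 by (intro mult_strict_left_mono) auto
    then show ?thesis by (simp add: algebra_simps)
  qed
  have c2: "(1-2*e*(1+a))*(1+2*a) < (a - e*(1+a))*(3+2*a)"
  proof -
    have "0 < (2*a-1)*(a+1) + e*(1+a)*(2*a-1)" using a1 epos by (intro add_pos_pos mult_pos_pos) auto
    then show ?thesis by (simp add: algebra_simps)
  qed
  have c3: "3*(1-2*e*(1+a)) < (1-2*e)*(3+2*a)"
  proof -
    have "0 < e*a" using epos a1 by simp
    then show ?thesis using a1 by (simp add: algebra_simps)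
  qed
  have c4: "e*(2+3*a) < a" using e1 a1 by linarith
  have "(3-2*a)/(4*(2+3*a)) < 1/5" using p1 a1 by (simp add: divide_simps)
  then have c6: "5*e < 1" using \<open>e \<le> (3-2*a)/(4*(2+3*a))\<close> by linarith
  have q1: "(1-2*e*(1+a))/(3+2*a) < a/(2+3*a)" using c1 p1 by (simp add: divide_simps)
  have q2: "(1-2*e*(1+a))/(3+2*a) < (a - e*(1+a))/(1+2*a)" using c2 p1 by (simp add: divide_simps)
  have q3: "(1-2*e*(1+a))/(3+2*a) < (1-2*e)/3" using c3 p1 by (simp add: divide_simps)
  have q4: "e < a/(2+3*a)" using c4 p1 by (simp add: divide_simps)
  have q5: "e < (a - e*(1+a))/(1+2*a)" using c4 p1 by (simp add: divide_simps algebra_simps)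
  have q6: "e < (1-2*e)/3" using c6 by simp
  have "lo < hi" unfolding lo_def hi_def max_less_iff_conj min_less_iff_conj using q1 q2 q3 q4 q5 q6 by blast
  then obtain t where t: "lo < t" "t < hi" using dense by blast
  have t1: "(1-2*e*(1+a)) < t*(3+2*a)" "e < t" using t(1) p1 unfolding lo_def by (auto simp: divide_simps)
  have t2: "t*(2+3*a) < a" "t*(1+2*a) < a - e*(1+a)" "3*t < 1-2*e" using t(2) p1 unfolding hi_def by (auto simp: divide_simps)
  show ?thesis
    apply (rule exI[of _ t], rule exI[of _ e])
    using t1 t2 epos ed by (auto simp: algebra_simps)
qed

definition vO :: "real \<Rightarrow> nat \<Rightarrow> real" where
  "vO t k = (if k = 2 then 1-3*t else if k < 4 then t else 0)"
definition vS :: "real \<Rightarrow> real \<Rightarrow> nat \<Rightarrow> real" where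
  "vS t e k = (if k = 0 then t else if k = 1 then t+e else if k = 2 then 1-3*t-2*e else if k = 3 then t+e else 0)"
definition vD :: "real \<Rightarrow> real \<Rightarrow> nat \<Rightarrow> real" where
  "vD t e k = (if k = 0 then t else if k = 1 then t+e else if k = 2 then 1-3*t else if k = 3 then t-e else 0)"
definition vP :: "real \<Rightarrow> real \<Rightarrow> nat \<Rightarrow> real" where
  "vP t e k = (if k = 0 then t else if k = 1 then t+e else if k = 2 then 1-3*t-e else if k = 3 then t else 0)"
definition VV :: "real \<Rightarrow> real \<Rightarrow> nat \<Rightarrow> bool \<Rightarrow> nat \<Rightarrow> nat \<Rightarrow> real" where
  "VV t e ow s = (\<lambda>i. if i = ow then vO t else if s then vS t e else vD t e)"

lemma bar_lower:
  assumes "finite S" "g \<in> S"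
  shows "val f S - f g \<le> val f (bar f S)"
proof -
  have ne: "S \<noteq> {}" using assms by auto
  let ?h = "\<lambda>g. val f (S - {g})"
  have fin: "finite (?h ` S)" "?h ` S \<noteq> {}" using assms by auto
  obtain g0 where g0: "g0 \<in> S" "?h g0 = Max (?h ` S)" using Max_in[OF fin] by auto
  have ex: "\<exists>g. g \<in> S \<and> (\<forall>g'\<in>S. val f (S - {g'}) \<le> val f (S - {g}))"
    using g0 fin by (metis Max_ge image_eqI)
  define gs where "gs = (SOME g. g \<in> S \<and> (\<forall>g'\<in>S. val f (S - {g'}) \<le> val f (S - {g})))"
  have gs: "gs \<in> S" "\<forall>g'\<in>S. val f (S - {g'}) \<le> val f (S - {gs})"
    using someI_ex[OF ex] unfolding gs_def by blast+
  have "bar f S = S - {gs}" unfolding bar_def gs_def using ne by simp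
  moreover have "val f (S - {g}) = val f S - f g" unfolding val_def using assms by (simp add: sum_diff1)
  moreover have "val f (S-{g}) \<le> val f (S - {gs})" using gs(2) assms(2) by blast
  ultimately show ?thesis by simp
qed

lemma viol:
  assumes "i < 2" "j < 2" "g \<in> agent_bundle 4 alloc j"
    "val (v i) (agent_bundle 4 alloc i) < a * (val (v i) (agent_bundle 4 alloc j) - v i g)" "0 \<le> a"
  shows "\<not> a_EFX a 2 4 v alloc"
proof -
  have fin: "finite (agent_bundle 4 alloc j)" unfolding agent_bundle_def by simp
  have "a * (val (v i) (agent_bundle 4 alloc j) - v i g) \<le> a * val (v i) (bar (v i) (agent_bundle 4 alloc j))"
    using mult_left_mono[OF bar_lower[OF fin assms(3)] assms(5)] .
  then show ?thesis using assms unfolding a_EFX_def by force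
qed

lemma bund: "agent_bundle 4 alloc i = (if alloc 0 = i then {0} else {}) \<union> (if alloc 1 = i then {1} else {})
   \<union> (if alloc 2 = i then {2} else {}) \<union> (if alloc 3 = i then {3} else {})"
  unfolding agent_bundle_def
proof (rule set_eqI)
  fix x
  have k: "x<(4::nat) \<longleftrightarrow> x = 0 \<or> x = 1 \<or> x = 2 \<or> x = 3" by auto
  show "x \<in> {k. k < (4::nat) \<and> alloc k = i} \<longleftrightarrow> x \<in> (if alloc 0 = i then {0} else {}) \<union> (if alloc 1 = i then {1} else {})
   \<union> (if alloc 2 = i then {2} else {}) \<union> (if alloc 3 = i then {3} else {})"
    unfolding mem_Collect_eq k by (cases "x = 0"; cases "x = 1"; cases "x = 2"; cases "x = 3"; simp)
qed

lemma leaf: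
  fixes a t e :: real
  assumes o: "ow < 2" and al0: "alloc 0 = ow" and al1: "alloc 1 = (if s then ow else 1 - ow)" and al2: "alloc 2 < 2" and al3: "alloc 3 < 2"
    and a0: "0 \<le> a" and h1: "2*t < a*(1-3*t)" and h2: "1-3*t-2*e < 2*a*(t+e)" and h3: "t+e < a*(1-2*t-e)"
    and h4: "0 < a*(1-t)" and h5: "t < a*(1-2*t)"
  shows "\<not> a_EFX a 2 4 (VV t e ow s) alloc"
proof -
  have oo: "ow = 0 \<or> ow = 1" using o by auto
  have c2: "alloc 2 = 0 \<or> alloc 2 = 1" using al2 by auto
  have c3: "alloc 3 = 0 \<or> alloc 3 = 1" using al3 by auto
  note defs = bund val_def VV_def vO_def vS_def vD_def
  have C0: "ow = 0 \<Longrightarrow> s \<Longrightarrow> alloc 2 = 0 \<Longrightarrow> alloc 3 = 0 \<Longrightarrow> ?thesis"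
  proof -
    assume cs: "ow = 0" "s" "alloc 2 = 0" "alloc 3 = 0"
    show ?thesis
    proof (rule viol[where i=1 and j=0 and g=0])
      show "(0::nat) \<in> agent_bundle 4 alloc 0" using cs al0 al1 by (simp add: bund)
      show "val (VV t e ow s 1) (agent_bundle 4 alloc 1) < a * (val (VV t e ow s 1) (agent_bundle 4 alloc 0) - VV t e ow s 1 0)"
        using cs al0 al1 h4 by (simp add: defs algebra_simps)
    qed (use a0 in auto)
  qed
  have C1: "ow = 0 \<Longrightarrow> s \<Longrightarrow> alloc 2 = 0 \<Longrightarrow> alloc 3 = 1 \<Longrightarrow> ?thesis"
  proof -
    assume cs: "ow = 0" "s" "alloc 2 = 0" "alloc 3 = 1"
    show ?thesis
    proof (rule viol[where i=1 and j=0 and g=0])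
      show "(0::nat) \<in> agent_bundle 4 alloc 0" using cs al0 al1 by (simp add: bund)
      show "val (VV t e ow s 1) (agent_bundle 4 alloc 1) < a * (val (VV t e ow s 1) (agent_bundle 4 alloc 0) - VV t e ow s 1 0)"
        using cs al0 al1 h3 by (simp add: defs algebra_simps)
    qed (use a0 in auto)
  qed
  have C2: "ow = 0 \<Longrightarrow> s \<Longrightarrow> alloc 2 = 1 \<Longrightarrow> alloc 3 = 0 \<Longrightarrow> ?thesis"
  proof -
    assume cs: "ow = 0" "s" "alloc 2 = 1" "alloc 3 = 0"
    show ?thesis
    proof (rule viol[where i=1 and j=0 and g=0])
      show "(0::nat) \<in> agent_bundle 4 alloc 0" using cs al0 al1 by (simp add: bund)
      show "val (VV t e ow s 1) (agent_bundle 4 alloc 1) < a * (val (VV t e ow s 1) (agent_bundle 4 alloc 0) - VV t e ow s 1 0)"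
        using cs al0 al1 h2 by (simp add: defs algebra_simps)
    qed (use a0 in auto)
  qed
  have C3: "ow = 0 \<Longrightarrow> s \<Longrightarrow> alloc 2 = 1 \<Longrightarrow> alloc 3 = 1 \<Longrightarrow> ?thesis"
  proof -
    assume cs: "ow = 0" "s" "alloc 2 = 1" "alloc 3 = 1"
    show ?thesis
    proof (rule viol[where i=0 and j=1 and g=3])
      show "(3::nat) \<in> agent_bundle 4 alloc 1" using cs al0 al1 by (simp add: bund)
      show "val (VV t e ow s 0) (agent_bundle 4 alloc 0) < a * (val (VV t e ow s 0) (agent_bundle 4 alloc 1) - VV t e ow s 0 3)"
        using cs al0 al1 h1 by (simp add: defs algebra_simps)
    qed (use a0 in auto)
  qed
  have C4: "ow = 0 \<Longrightarrow> \<not> s \<Longrightarrow> alloc 2 = 0 \<Longrightarrow> alloc 3 = 0 \<Longrightarrow> ?thesis"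
  proof -
    assume cs: "ow = 0" "\<not> s" "alloc 2 = 0" "alloc 3 = 0"
    show ?thesis
    proof (rule viol[where i=1 and j=0 and g=0])
      show "(0::nat) \<in> agent_bundle 4 alloc 0" using cs al0 al1 by (simp add: bund)
      show "val (VV t e ow s 1) (agent_bundle 4 alloc 1) < a * (val (VV t e ow s 1) (agent_bundle 4 alloc 0) - VV t e ow s 1 0)"
        using cs al0 al1 h3 by (simp add: defs algebra_simps)
    qed (use a0 in auto)
  qed
  have C5: "ow = 0 \<Longrightarrow> \<not> s \<Longrightarrow> alloc 2 = 0 \<Longrightarrow> alloc 3 = 1 \<Longrightarrow> ?thesis"
  proof -
    assume cs: "ow = 0" "\<not> s" "alloc 2 = 0" "alloc 3 = 1"
    show ?thesis
    proof (rule viol[where i=1 and j=0 and g=0])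
      show "(0::nat) \<in> agent_bundle 4 alloc 0" using cs al0 al1 by (simp add: bund)
      show "val (VV t e ow s 1) (agent_bundle 4 alloc 1) < a * (val (VV t e ow s 1) (agent_bundle 4 alloc 0) - VV t e ow s 1 0)"
        using cs al0 al1 h1 by (simp add: defs algebra_simps)
    qed (use a0 in auto)
  qed
  have C6: "ow = 0 \<Longrightarrow> \<not> s \<Longrightarrow> alloc 2 = 1 \<Longrightarrow> alloc 3 = 0 \<Longrightarrow> ?thesis"
  proof -
    assume cs: "ow = 0" "\<not> s" "alloc 2 = 1" "alloc 3 = 0"
    show ?thesis
    proof (rule viol[where i=0 and j=1 and g=1])
      show "(1::nat) \<in> agent_bundle 4 alloc 1" using cs al0 al1 by (simp add: bund)
      show "val (VV t e ow s 0) (agent_bundle 4 alloc 0) < a * (val (VV t e ow s 0) (agent_bundle 4 alloc 1) - VV t e ow s 0 1)"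
        using cs al0 al1 h1 by (simp add: defs algebra_simps)
    qed (use a0 in auto)
  qed
  have C7: "ow = 0 \<Longrightarrow> \<not> s \<Longrightarrow> alloc 2 = 1 \<Longrightarrow> alloc 3 = 1 \<Longrightarrow> ?thesis"
  proof -
    assume cs: "ow = 0" "\<not> s" "alloc 2 = 1" "alloc 3 = 1"
    show ?thesis
    proof (rule viol[where i=0 and j=1 and g=1])
      show "(1::nat) \<in> agent_bundle 4 alloc 1" using cs al0 al1 by (simp add: bund)
      show "val (VV t e ow s 0) (agent_bundle 4 alloc 0) < a * (val (VV t e ow s 0) (agent_bundle 4 alloc 1) - VV t e ow s 0 1)"
        using cs al0 al1 h5 by (simp add: defs algebra_simps)
    qed (use a0 in auto)
  qed
  have C8: "ow = 1 \<Longrightarrow> s \<Longrightarrow> alloc 2 = 1 \<Longrightarrow> alloc 3 = 1 \<Longrightarrow> ?thesis"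
  proof -
    assume cs: "ow = 1" "s" "alloc 2 = 1" "alloc 3 = 1"
    show ?thesis
    proof (rule viol[where i=0 and j=1 and g=0])
      show "(0::nat) \<in> agent_bundle 4 alloc 1" using cs al0 al1 by (simp add: bund)
      show "val (VV t e ow s 0) (agent_bundle 4 alloc 0) < a * (val (VV t e ow s 0) (agent_bundle 4 alloc 1) - VV t e ow s 0 0)"
        using cs al0 al1 h4 by (simp add: defs algebra_simps)
    qed (use a0 in auto)
  qed
  have C9: "ow = 1 \<Longrightarrow> s \<Longrightarrow> alloc 2 = 1 \<Longrightarrow> alloc 3 = 0 \<Longrightarrow> ?thesis"
  proof -
    assume cs: "ow = 1" "s" "alloc 2 = 1" "alloc 3 = 0"
    show ?thesis
    proof (rule viol[where i=0 and j=1 and g=0])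
      show "(0::nat) \<in> agent_bundle 4 alloc 1" using cs al0 al1 by (simp add: bund)
      show "val (VV t e ow s 0) (agent_bundle 4 alloc 0) < a * (val (VV t e ow s 0) (agent_bundle 4 alloc 1) - VV t e ow s 0 0)"
        using cs al0 al1 h3 by (simp add: defs algebra_simps)
    qed (use a0 in auto)
  qed
  have C10: "ow = 1 \<Longrightarrow> s \<Longrightarrow> alloc 2 = 0 \<Longrightarrow> alloc 3 = 1 \<Longrightarrow> ?thesis"
  proof -
    assume cs: "ow = 1" "s" "alloc 2 = 0" "alloc 3 = 1"
    show ?thesis
    proof (rule viol[where i=0 and j=1 and g=0])
      show "(0::nat) \<in> agent_bundle 4 alloc 1" using cs al0 al1 by (simp add: bund)
      show "val (VV t e ow s 0) (agent_bundle 4 alloc 0) < a * (val (VV t e ow s 0) (agent_bundle 4 alloc 1) - VV t e ow s 0 0)"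
        using cs al0 al1 h2 by (simp add: defs algebra_simps)
    qed (use a0 in auto)
  qed
  have C11: "ow = 1 \<Longrightarrow> s \<Longrightarrow> alloc 2 = 0 \<Longrightarrow> alloc 3 = 0 \<Longrightarrow> ?thesis"
  proof -
    assume cs: "ow = 1" "s" "alloc 2 = 0" "alloc 3 = 0"
    show ?thesis
    proof (rule viol[where i=1 and j=0 and g=3])
      show "(3::nat) \<in> agent_bundle 4 alloc 0" using cs al0 al1 by (simp add: bund)
      show "val (VV t e ow s 1) (agent_bundle 4 alloc 1) < a * (val (VV t e ow s 1) (agent_bundle 4 alloc 0) - VV t e ow s 1 3)"
        using cs al0 al1 h1 by (simp add: defs algebra_simps)
    qed (use a0 in auto)
  qed
  have C12: "ow = 1 \<Longrightarrow> \<not> s \<Longrightarrow> alloc 2 = 1 \<Longrightarrow> alloc 3 = 1 \<Longrightarrow> ?thesis"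
  proof -
    assume cs: "ow = 1" "\<not> s" "alloc 2 = 1" "alloc 3 = 1"
    show ?thesis
    proof (rule viol[where i=0 and j=1 and g=0])
      show "(0::nat) \<in> agent_bundle 4 alloc 1" using cs al0 al1 by (simp add: bund)
      show "val (VV t e ow s 0) (agent_bundle 4 alloc 0) < a * (val (VV t e ow s 0) (agent_bundle 4 alloc 1) - VV t e ow s 0 0)"
        using cs al0 al1 h3 by (simp add: defs algebra_simps)
    qed (use a0 in auto)
  qed
  have C13: "ow = 1 \<Longrightarrow> \<not> s \<Longrightarrow> alloc 2 = 1 \<Longrightarrow> alloc 3 = 0 \<Longrightarrow> ?thesis"
  proof -
    assume cs: "ow = 1" "\<not> s" "alloc 2 = 1" "alloc 3 = 0"
    show ?thesis
    proof (rule viol[where i=0 and j=1 and g=0])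
      show "(0::nat) \<in> agent_bundle 4 alloc 1" using cs al0 al1 by (simp add: bund)
      show "val (VV t e ow s 0) (agent_bundle 4 alloc 0) < a * (val (VV t e ow s 0) (agent_bundle 4 alloc 1) - VV t e ow s 0 0)"
        using cs al0 al1 h1 by (simp add: defs algebra_simps)
    qed (use a0 in auto)
  qed
  have C14: "ow = 1 \<Longrightarrow> \<not> s \<Longrightarrow> alloc 2 = 0 \<Longrightarrow> alloc 3 = 1 \<Longrightarrow> ?thesis"
  proof -
    assume cs: "ow = 1" "\<not> s" "alloc 2 = 0" "alloc 3 = 1"
    show ?thesis
    proof (rule viol[where i=1 and j=0 and g=1])
      show "(1::nat) \<in> agent_bundle 4 alloc 0" using cs al0 al1 by (simp add: bund)
      show "val (VV t e ow s 1) (agent_bundle 4 alloc 1) < a * (val (VV t e ow s 1) (agent_bundle 4 alloc 0) - VV t e ow s 1 1)"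
        using cs al0 al1 h1 by (simp add: defs algebra_simps)
    qed (use a0 in auto)
  qed
  have C15: "ow = 1 \<Longrightarrow> \<not> s \<Longrightarrow> alloc 2 = 0 \<Longrightarrow> alloc 3 = 0 \<Longrightarrow> ?thesis"
  proof -
    assume cs: "ow = 1" "\<not> s" "alloc 2 = 0" "alloc 3 = 0"
    show ?thesis
    proof (rule viol[where i=1 and j=0 and g=1])
      show "(1::nat) \<in> agent_bundle 4 alloc 0" using cs al0 al1 by (simp add: bund)
      show "val (VV t e ow s 1) (agent_bundle 4 alloc 1) < a * (val (VV t e ow s 1) (agent_bundle 4 alloc 0) - VV t e ow s 1 1)"
        using cs al0 al1 h5 by (simp add: defs algebra_simps)
    qed (use a0 in auto)
  qed
  show ?thesis using oo c2 c3 apply (cases s) apply (elim disjE) by (metis C0 C1 C2 C3 C4 C5 C6 C7 C8 C9 C10 C11 C12 C13 C14 C15)+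
qed


lemma sum4: "(\<Sum>k<(4::nat). f k) = f 0 + f 1 + f 2 + (f 3 :: real)"
  by (simp add: eval_nat_numeral)

lemma kval: "k_value 4 4 f"
  unfolding k_value_def using card_image_le[of "{..<4::nat}" f] by simp

theorem theorem4p5:
  fixes a \<eta> :: real
  assumes "1/2 < a" and "a \<le> 1"
    and "\<eta> < 1 - (1 - a) / min (6 * a) 4"
  shows "\<not> (\<exists>alg. online_alg 2 4 alg \<and>
           (\<forall>p v. (\<forall>i<2. normalized_val 4 (p i) \<and> normalized_val 4 (v i)
                        \<and> k_value 4 4 (p i) \<and> k_value 4 4 (v i)
                        \<and> pred_error 4 (p i) (v i) \<le> 1 - \<eta>)
                   \<longrightarrow> a_EFX a 2 4 v (alg p v)))"
proof
  assume "\<exists>alg. online_alg 2 4 alg \<and>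
           (\<forall>p v. (\<forall>i<2. normalized_val 4 (p i) \<and> normalized_val 4 (v i)
                        \<and> k_value 4 4 (p i) \<and> k_value 4 4 (v i)
                        \<and> pred_error 4 (p i) (v i) \<le> 1 - \<eta>)
                   \<longrightarrow> a_EFX a 2 4 v (alg p v))"
  then obtain alg where onl: "online_alg 2 4 alg" and
    H: "\<And>p v. (\<forall>i<2. normalized_val 4 (p i) \<and> normalized_val 4 (v i)
                        \<and> k_value 4 4 (p i) \<and> k_value 4 4 (v i)
                        \<and> pred_error 4 (p i) (v i) \<le> 1 - \<eta>)
                   \<Longrightarrow> a_EFX a 2 4 v (alg p v)" by blast
  have onl1: "\<And>p v k. k < 4 \<Longrightarrow> alg p v k < 2" using onl unfolding online_alg_def by blast
  have onl2: "\<And>p v v' k. (\<forall>i<2. \<forall>s\<le>k. v i s = v' i s) \<Longrightarrow> alg p v k = alg p v' k"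
    using onl unfolding online_alg_def by blast
  have dd: "(1 - a) / min (6 * a) 4 < 1 - \<eta>" using assms(3) by linarith
  obtain t e where te: "0 < e" "e \<le> 1 - \<eta>" "e \<le> t" "3*t+2*e \<le> 1" and h1: "2*t < a*(1-3*t)"
     and h2: "1-3*t-2*e < 2*a*(t+e)" and h3: "t+e < a*(1-2*t-e)"
    using core[OF assms(1,2) dd] by blast
  have a0: "0 \<le> a" using assms(1) by simp
  have h4: "0 < a*(1-t)" using assms(1) te by simp
  have "0 \<le> a*e" using a0 te by simp
  then have h5: "t < a*(1-2*t)" using h3 te by (simp add: algebra_simps)
  define p where "p = (\<lambda>i::nat. vP t e)"
  define v0 where "v0 = VV t e 0 True"
  define ow where "ow = alg p v0 0"
  define v1 where "v1 = VV t e ow True"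
  define s where "s = (alg p v1 1 = ow)"
  define v where "v = VV t e ow s"
  have ow2: "ow < 2" unfolding ow_def by (rule onl1) simp
  have al0: "alg p v 0 = ow" unfolding ow_def
    by (rule onl2) (simp add: v_def v0_def VV_def vO_def vS_def vD_def)
  have "alg p v 1 = alg p v1 1"
    by (rule onl2) (auto simp: v_def v1_def VV_def vO_def vS_def vD_def le_Suc_eq)
  moreover have "alg p v1 1 < 2" by (rule onl1) simp
  ultimately have al1: "alg p v 1 = (if s then ow else 1 - ow)" using ow2 unfolding s_def by auto
  have al2: "alg p v 2 < 2" by (rule onl1) simp
  have al3: "alg p v 3 < 2" by (rule onl1) simp
  have nP: "normalized_val 4 (vP t e)" using te unfolding normalized_val_def sum4
    by (auto simp: vP_def)
  have nO: "normalized_val 4 (vO t)" using te unfolding normalized_val_def sum4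
    by (auto simp: vO_def)
  have nS: "normalized_val 4 (vS t e)" using te unfolding normalized_val_def sum4
    by (auto simp: vS_def)
  have nD: "normalized_val 4 (vD t e)" using te unfolding normalized_val_def sum4
    by (auto simp: vD_def)
  have eO: "pred_error 4 (vP t e) (vO t) \<le> 1 - \<eta>" using te unfolding pred_error_def sum4
    by (simp add: vP_def vO_def)
  have eS: "pred_error 4 (vP t e) (vS t e) \<le> 1 - \<eta>" using te unfolding pred_error_def sum4
    by (simp add: vP_def vS_def)
  have eD: "pred_error 4 (vP t e) (vD t e) \<le> 1 - \<eta>" using te unfolding pred_error_def sum4
    by (simp add: vP_def vD_def)
  have "\<forall>i<2. normalized_val 4 (p i) \<and> normalized_val 4 (v i)
                        \<and> k_value 4 4 (p i) \<and> k_value 4 4 (v i)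
                        \<and> pred_error 4 (p i) (v i) \<le> 1 - \<eta>"
    using nP nO nS nD eO eS eD kval unfolding p_def v_def VV_def by auto
  then have "a_EFX a 2 4 v (alg p v)" by (rule H)
  moreover have "\<not> a_EFX a 2 4 (VV t e ow s) (alg p v)"
    by (rule leaf[OF ow2 al0 al1 al2 al3 a0 h1 h2 h3 h4 h5])
  then have "\<not> a_EFX a 2 4 v (alg p v)" unfolding v_def .
  ultimately show False by contradiction
qed

end
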